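(* Let $G$ be a finite simple graph. Then the independence complex $\Delta(G)$ is sortable if and only if $G$ is a proper interval graph.
   Context: The independence complex $\Delta(G)$ is the simplicial complex of all independent sets of $G$. For finite $F,G\subset\mathbb{N}$ with $|F|=r,|G|=s$, write $\mathbf{x}^F\mathbf{x}^G=x_{i_1}\cdots x_{i_{r+s}}$ with $i_1\le\cdots\le i_{r+s}$ (where $\mathbf{x}^F=\prod_{i\in F}x_i$) and set $\mathrm{sort}(F,G)=(\{i_k:k\text{ odd}\},\{i_k:k\text{ even}\})$. A simplicial complex $\Delta$ with $V(\Delta)\subset\mathbb{N}$ is sortable with respect to the given labeling if $\mathrm{sort}(F,G)\in\Delta\times\Delta$ for all $F,G\in\Delta$; $\Delta$ is sortable if it is sortable with respect to some labeling of its vertices by distinct integers. A proper interval graph is a graph whose vertices can be assigned real intervals, none properly containing another, such that two vertices are adjacent iff their intervals intersect. *)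

theory Defs
  imports Complex_Main "HOL-Library.Multiset"
begin

definition finite_simple_graph :: "'a set \<Rightarrow> ('a \<Rightarrow> 'a \<Rightarrow> bool) \<Rightarrow> bool" where
  "finite_simple_graph V E \<longleftrightarrow> finite V
     \<and> (\<forall>x y. E x y \<longrightarrow> x \<in> V \<and> y \<in> V)
     \<and> (\<forall>x y. E x y \<longrightarrow> E y x)
     \<and> (\<forall>x. \<not> E x x)"

definition independence_complex :: "'a set \<Rightarrow> ('a \<Rightarrow> 'a \<Rightarrow> bool) \<Rightarrow> 'a set set" where
  "independence_complex V E = {F. F \<subseteq> V \<and> (\<forall>x\<in>F. \<forall>y\<in>F. \<not> E x y)}"

text \<open>sort(F,G): sort the monomial x^F x^G as i_1 \<le> ... \<le> i_{r+s} and split into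
  odd and even positions (1-based; i.e. even / odd 0-based list indices).\<close>
definition sort_pair :: "nat set \<Rightarrow> nat set \<Rightarrow> nat set \<times> nat set" where
  "sort_pair F G =
     (let xs = sorted_list_of_multiset (mset_set F + mset_set G)
      in ({xs ! k | k. k < length xs \<and> even k}, {xs ! k | k. k < length xs \<and> odd k}))"

definition sortable_wrt_labeling :: "nat set set \<Rightarrow> bool" where
  "sortable_wrt_labeling \<Delta> \<longleftrightarrow>
     (\<forall>F\<in>\<Delta>. \<forall>G\<in>\<Delta>. fst (sort_pair F G) \<in> \<Delta> \<and> snd (sort_pair F G) \<in> \<Delta>)"

definition sortable :: "'a set set \<Rightarrow> bool" where
  "sortable \<Delta> \<longleftrightarrow> (\<exists>L :: 'a \<Rightarrow> nat. inj_on L (\<Union>\<Delta>) \<and> sortable_wrt_labeling ((\<lambda>F. L ` F) ` \<Delta>))"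

definition proper_interval_graph :: "'a set \<Rightarrow> ('a \<Rightarrow> 'a \<Rightarrow> bool) \<Rightarrow> bool" where
  "proper_interval_graph V E \<longleftrightarrow>
     (\<exists>a b :: 'a \<Rightarrow> real.
        (\<forall>v\<in>V. a v \<le> b v)
      \<and> (\<forall>u\<in>V. \<forall>v\<in>V. \<not> ({a u..b u} \<subset> {a v..b v}))
      \<and> (\<forall>u\<in>V. \<forall>v\<in>V. u \<noteq> v \<longrightarrow> (E u v \<longleftrightarrow> {a u..b u} \<inter> {a v..b v} \<noteq> {})))"

end

theory Submission
  imports Defs
begin

lemma count_two:
  assumes "i < j" "j < length xs" "xs!i = x" "xs!j = x"
  shows "count (mset xs) x \<ge> 2"
proof -
  have xs: "xs = take j xs @ xs!j # drop (Suc j) xs"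
    using assms(2) by (simp add: Cons_nth_drop_Suc)
  have "x \<in> set (take j xs)" using assms by (metis in_set_conv_nth length_take min_less_iff_conj nth_take order.strict_trans)
  hence "count (mset (take j xs)) x \<ge> 1" by (simp add: Suc_le_eq count_greater_zero_iff[symmetric])
  moreover have "count (mset xs) x = count (mset (take j xs)) x + count (mset (xs!j # drop (Suc j) xs)) x"
    by (subst xs) simp
  moreover have "count (mset (xs!j # drop (Suc j) xs)) x \<ge> 1" using assms(4) by simp
  ultimately show ?thesis by linarith
qed

lemma sort_core:
  fixes F G W :: "nat set" and R :: "nat \<Rightarrow> nat \<Rightarrow> bool"
  assumes fin: "finite F" "finite G" and sub: "F \<subseteq> W" "G \<subseteq> W"
    and indF: "\<forall>a\<in>F. \<forall>b\<in>F. \<not> R a b" and indG: "\<forall>a\<in>G. \<forall>b\<in>G. \<not> R a b"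
    and sym: "\<forall>a b. R a b \<longrightarrow> R b a"
    and umb: "\<forall>x\<in>W. \<forall>y\<in>W. \<forall>z\<in>W. x < y \<longrightarrow> y < z \<longrightarrow> R x z \<longrightarrow> R x y \<and> R y z"
  defines "xs \<equiv> sorted_list_of_multiset (mset_set F + mset_set G)"
  shows "\<forall>i<length xs. \<forall>j<length xs. even i = even j \<longrightarrow> xs!i \<in> W \<and> \<not> R (xs!i) (xs!j)"
proof -
  have srt: "sorted xs" unfolding xs_def by simp
  have ms: "mset xs = mset_set F + mset_set G" unfolding xs_def by simp
  have setxs: "set xs = F \<union> G" unfolding xs_def using fin by simp
  have cnt: "count (mset xs) x = (if x \<in> F then 1 else 0) + (if x \<in> G then 1 else 0)" for x
    using ms fin by simp
  have mem: "xs!k \<in> F \<union> G" if "k < length xs" for k using that setxs nth_mem by blast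
  have step1: "\<not> R (xs!k) (xs!(k+2))" if k: "k+2 < length xs" for k
  proof
    assume Rxz: "R (xs!k) (xs!(k+2))"
    define x y z where "x = xs!k" and "y = xs!(k+1)" and "z = xs!(k+2)"
    have xF: "x \<in> F \<union> G" "y \<in> F \<union> G" "z \<in> F \<union> G" unfolding x_def y_def z_def using k mem by auto
    have Rxz': "R x z" using Rxz x_def z_def by simp
    have le: "x \<le> y" "y \<le> z" unfolding x_def y_def z_def using srt k
      by (auto intro: sorted_nth_mono)
    have nx: "x \<notin> F \<inter> G" using Rxz' xF indF indG by blast
    have nz: "z \<notin> F \<inter> G" using Rxz' xF indF indG by blast
    have "x \<noteq> y"
    proof
      assume "x = y"
      hence "count (mset xs) x \<ge> 2" using count_two[of k "k+1" xs x] k x_def y_def by simp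
      thus False using cnt[of x] nx by (auto split: if_splits)
    qed
    moreover have "y \<noteq> z"
    proof
      assume "y = z"
      hence "count (mset xs) z \<ge> 2" using count_two[of "k+1" "k+2" xs z] k y_def z_def by simp
      thus False using cnt[of z] nz by (auto split: if_splits)
    qed
    ultimately have "x < y" "y < z" using le by auto
    hence "R x y" "R y z" using umb xF sub Rxz' by blast+
    thus False using xF Rxz' indF indG by blast
  qed
  have step2: "\<not> R (xs!i) (xs!(i+2*m))" if "i + 2*m < length xs" "m > 0" for i m
    using that
  proof (induction m)
    case 0 then show ?case by simp
  next
    case (Suc m)
    show ?case
    proof (cases "m = 0")
      case True then show ?thesis using step1[of i] Suc by simp
    next
      case False
      hence IH: "\<not> R (xs!i) (xs!(i+2*m))" using Suc by simp
      define x y z where "x = xs!i" and "y = xs!(i+2*m)" and "z = xs!(i+2*m+2)"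
      have zz: "xs!(i + 2 * Suc m) = z" by (simp add: z_def)
      have yz: "\<not> R y z" using step1[of "i+2*m"] Suc.prems unfolding y_def z_def by simp
      have xyzW: "x \<in> W" "y \<in> W" "z \<in> W" unfolding x_def y_def z_def using mem[of i] mem[of "i+2*m"] mem[of "i+2*m+2"] Suc.prems sub by auto
      have le: "x \<le> y" "y \<le> z" unfolding x_def y_def z_def using srt Suc.prems
        by (auto intro: sorted_nth_mono)
      show ?thesis unfolding zz x_def[symmetric]
      proof
        assume Rxz: "R x z"
        show False
        proof (cases "x = y")
          case True thus False using Rxz yz by simp
        next
          case xy: False
          show False
          proof (cases "y = z")
            case True thus False using Rxz IH x_def y_def by simp
          next
            case False
            hence "x < y" "y < z" using xy le by auto
            hence "R x y" using umb xyzW Rxz by blast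
            thus False using IH x_def y_def by simp
          qed
        qed
      qed
    qed
  qed
  show ?thesis
  proof (intro allI impI)
    fix i j assume i: "i < length xs" and j: "j < length xs" and par: "even i = even j"
    have W: "xs!i \<in> W" using mem i sub by blast
    have "\<not> R (xs!i) (xs!j)"
    proof (cases i j rule: linorder_cases)
      case less
      have "even (j - i)" using par less by (simp add: even_diff_nat)
      then obtain m where m: "j - i = 2*m" by (metis evenE)
      hence "j = i + 2*m" "m > 0" using less by auto
      thus ?thesis using step2 j by blast
    next
      case equal
      thus ?thesis using mem[OF i] indF indG by blast
    next
      case greater
      have "even (i - j)" using par greater by (simp add: even_diff_nat)
      then obtain m where m: "i - j = 2*m" by (metis evenE)
      hence "i = j + 2*m" "m > 0" using greater by auto
      thus ?thesis using step2 i sym by blast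
    qed
    thus "xs!i \<in> W \<and> \<not> R (xs!i) (xs!j)" using W by blast
  qed
qed


definition umbrella :: "'a set \<Rightarrow> ('a \<Rightarrow> 'a \<Rightarrow> bool) \<Rightarrow> ('a \<Rightarrow> nat) \<Rightarrow> bool" where
  "umbrella V E L \<longleftrightarrow> (\<forall>x\<in>V. \<forall>y\<in>V. \<forall>z\<in>V. L x < L y \<longrightarrow> L y < L z \<longrightarrow> E x z \<longrightarrow> E x y \<and> E y z)"

lemma ic_union:
  assumes "finite_simple_graph V E"
  shows "\<Union>(independence_complex V E) = V"
proof
  show "\<Union>(independence_complex V E) \<subseteq> V" unfolding independence_complex_def by auto
  show "V \<subseteq> \<Union>(independence_complex V E)"
  proof
    fix v assume "v \<in> V"
    hence "{v} \<in> independence_complex V E" using assms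
      unfolding independence_complex_def finite_simple_graph_def by auto
    thus "v \<in> \<Union>(independence_complex V E)" by blast
  qed
qed

lemma sort3:
  fixes a b c :: nat
  assumes "a < b" "b < c"
  shows "sort_pair {a,b} {c} = ({a,c},{b})" "sort_pair {b,c} {a} = ({a,c},{b})"
proof -
  have l1: "sorted_list_of_multiset (mset_set {a,b} + mset_set {c}) = [a,b,c]"
    using assms by simp
  have l2: "sorted_list_of_multiset (mset_set {b,c} + mset_set {a}) = [a,b,c]"
    using assms by simp
  have s1: "{[a,b,c] ! k |k. k < length [a,b,c] \<and> even k} = {a,c}"
  proof -
    have "{[a,b,c] ! k |k. k < length [a,b,c] \<and> even k} = (\<lambda>k. [a,b,c]!k) ` {0,2}"
      apply (auto simp: less_Suc_eq numeral_3_eq_3)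
      apply (rule exI[of _ 0]; simp)
      apply (rule exI[of _ 2]; simp)
      done
    thus ?thesis by simp
  qed
  have s2: "{[a,b,c] ! k |k. k < length [a,b,c] \<and> odd k} = {b}"
  proof -
    have "{[a,b,c] ! k |k. k < length [a,b,c] \<and> odd k} = (\<lambda>k. [a,b,c]!k) ` {1}"
      apply (auto simp: less_Suc_eq numeral_3_eq_3)
      apply (rule exI[of _ 1]; simp)
      done
    thus ?thesis by simp
  qed
  show "sort_pair {a,b} {c} = ({a,c},{b})" unfolding sort_pair_def Let_def l1 s1 s2 by simp
  show "sort_pair {b,c} {a} = ({a,c},{b})" unfolding sort_pair_def Let_def l2 s1 s2 by simp
qed

lemma img_mem:
  assumes "L ` H = S" "H \<subseteq> V" "inj_on L V" "v \<in> V" "L v \<in> S"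
  shows "v \<in> H"
  using assms by (metis imageE inj_onD subsetD)

lemma sortable_imp_umb:
  assumes g: "finite_simple_graph V E" and inj: "inj_on L V"
    and s: "sortable_wrt_labeling ((\<lambda>F. L ` F) ` independence_complex V E)"
  shows "umbrella V E L"
  unfolding umbrella_def
proof (intro ballI impI conjI)
  fix x y z assume xyz: "x \<in> V" "y \<in> V" "z \<in> V" and lt: "L x < L y" "L y < L z" and Exz: "E x z"
  have sym: "\<And>u v. E u v \<Longrightarrow> E v u" and irr: "\<And>u. \<not> E u u" using g unfolding finite_simple_graph_def by auto
  have key: "False" if H: "L ` H = {L x, L z}" "H \<in> independence_complex V E" for H
  proof -
    have "H \<subseteq> V" using H unfolding independence_complex_def by auto
    hence "x \<in> H" "z \<in> H" using img_mem[OF H(1) _ inj] xyz by auto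
    thus False using H(2) Exz unfolding independence_complex_def by auto
  qed
  show "E x y"
  proof (rule ccontr)
    assume n: "\<not> E x y"
    have F: "{x,y} \<in> independence_complex V E" using n xyz irr sym unfolding independence_complex_def by auto
    have G: "{z} \<in> independence_complex V E" using xyz irr unfolding independence_complex_def by auto
    have "fst (sort_pair (L`{x,y}) (L`{z})) \<in> (\<lambda>F. L ` F) ` independence_complex V E"
      using s F G unfolding sortable_wrt_labeling_def by blast
    hence "{L x, L z} \<in> (\<lambda>F. L ` F) ` independence_complex V E" using sort3(1)[OF lt] by simp
    thus False using key by (metis (no_types, lifting) imageE)
  qed
  show "E y z"
  proof (rule ccontr)
    assume n: "\<not> E y z"
    have F: "{y,z} \<in> independence_complex V E" using n xyz irr sym unfolding independence_complex_def by auto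
    have G: "{x} \<in> independence_complex V E" using xyz irr unfolding independence_complex_def by auto
    have "fst (sort_pair (L`{y,z}) (L`{x})) \<in> (\<lambda>F. L ` F) ` independence_complex V E"
      using s F G unfolding sortable_wrt_labeling_def by blast
    hence "{L x, L z} \<in> (\<lambda>F. L ` F) ` independence_complex V E" using sort3(2)[OF lt] by simp
    thus False using key by (metis (no_types, lifting) imageE)
  qed
qed

lemma mem_image_ic:
  assumes inj: "inj_on L V" and S: "S \<subseteq> L ` V"
    and ind: "\<forall>i\<in>S. \<forall>j\<in>S. \<not> E (inv_into V L i) (inv_into V L j)"
  shows "S \<in> (\<lambda>F. L ` F) ` independence_complex V E"
proof
  have eq: "\<And>x. x\<in>S \<Longrightarrow> L (inv_into V L x) = x" using S by (meson f_inv_into_f subsetD)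
  show "S = L ` (inv_into V L ` S)" using eq by force
  show "inv_into V L ` S \<in> independence_complex V E"
    unfolding independence_complex_def using S ind by (auto intro: inv_into_into)
qed

lemma umb_imp_sortable:
  assumes g: "finite_simple_graph V E" and inj: "inj_on L V" and u: "umbrella V E L"
  shows "sortable_wrt_labeling ((\<lambda>F. L ` F) ` independence_complex V E)"
  unfolding sortable_wrt_labeling_def
proof (intro ballI conjI)
  fix F' G' assume F': "F' \<in> (\<lambda>F. L ` F) ` independence_complex V E"
    and G': "G' \<in> (\<lambda>F. L ` F) ` independence_complex V E"
  define g where "g = inv_into V L"
  define R where "R = (\<lambda>i j. E (g i) (g j))"
  have finV: "finite V" and sym: "\<And>u v. E u v \<Longrightarrow> E v u" using g unfolding finite_simple_graph_def by auto
  have gL: "g (L v) = v" if "v \<in> V" for v using inj that unfolding g_def by simp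
  have indep: "\<forall>a\<in>S. \<forall>b\<in>S. \<not> R a b" "S \<subseteq> L ` V" "finite S"
    if S_in: "S \<in> (\<lambda>F. L ` F) ` independence_complex V E" for S
  proof -
    obtain H where H: "S = L ` H" "H \<in> independence_complex V E" using S_in by blast
    have HV: "H \<subseteq> V" using H unfolding independence_complex_def by auto
    show "S \<subseteq> L ` V" using H HV by auto
    show "finite S" using H HV finV by (metis finite_imageI finite_subset)
    show "\<forall>a\<in>S. \<forall>b\<in>S. \<not> R a b"
    proof (intro ballI)
      fix a b assume "a \<in> S" "b \<in> S"
      then obtain x y where "x \<in> H" "y \<in> H" "a = L x" "b = L y" using H by blast
      moreover have "g a = x" "g b = y" using \<open>x \<in> H\<close> \<open>y \<in> H\<close> \<open>a = L x\<close> \<open>b = L y\<close> HV gL by auto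
      ultimately show "\<not> R a b" using H unfolding R_def independence_complex_def by auto
    qed
  qed
  have umbR: "\<forall>x\<in>L`V. \<forall>y\<in>L`V. \<forall>z\<in>L`V. x < y \<longrightarrow> y < z \<longrightarrow> R x z \<longrightarrow> R x y \<and> R y z"
    using u gL unfolding umbrella_def R_def by auto
  have symR: "\<forall>a b. R a b \<longrightarrow> R b a" using sym unfolding R_def by auto
  define xs where "xs = sorted_list_of_multiset (mset_set F' + mset_set G')"
  have core: "\<forall>i<length xs. \<forall>j<length xs. even i = even j \<longrightarrow> xs!i \<in> L`V \<and> \<not> R (xs!i) (xs!j)"
    unfolding xs_def
    using sort_core[OF indep(3)[OF F'] indep(3)[OF G'] indep(2)[OF F'] indep(2)[OF G'] indep(1)[OF F'] indep(1)[OF G'] symR umbR]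
    by simp
  have fst: "fst (sort_pair F' G') = {xs ! k |k. k < length xs \<and> even k}"
    and snd: "snd (sort_pair F' G') = {xs ! k |k. k < length xs \<and> odd k}"
    unfolding sort_pair_def xs_def Let_def by simp_all
  show "fst (sort_pair F' G') \<in> (\<lambda>F. L ` F) ` independence_complex V E"
    unfolding fst
    apply (rule mem_image_ic[OF inj])
    using core unfolding R_def g_def by blast+
  show "snd (sort_pair F' G') \<in> (\<lambda>F. L ` F) ` independence_complex V E"
    unfolding snd
    apply (rule mem_image_ic[OF inj])
    using core unfolding R_def g_def by blast+
qed

lemma sortable_iff_umb:
  assumes g: "finite_simple_graph V E"
  shows "sortable (independence_complex V E) \<longleftrightarrow> (\<exists>L. inj_on L V \<and> umbrella V E L)"
  unfolding sortable_def ic_union[OF g]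
  using sortable_imp_umb[OF g] umb_imp_sortable[OF g] by blast


lemma ivl_meet:
  fixes p q s t :: real
  assumes "p \<le> q" "s \<le> t"
  shows "{p..q} \<inter> {s..t} \<noteq> {} \<longleftrightarrow> s \<le> q \<and> p \<le> t"
  using assms by (auto simp: max_def min_def)

lemma pig_imp_umb:
  assumes g: "finite_simple_graph V E" and p: "proper_interval_graph V E"
  shows "\<exists>L. inj_on L V \<and> umbrella V E L"
proof -
  have finV: "finite V" using g unfolding finite_simple_graph_def by auto
  obtain a b :: "_ \<Rightarrow> real" where ab: "\<forall>v\<in>V. a v \<le> b v"
    and np: "\<forall>u\<in>V. \<forall>v\<in>V. \<not> ({a u..b u} \<subset> {a v..b v})"
    and ed: "\<forall>u\<in>V. \<forall>v\<in>V. u \<noteq> v \<longrightarrow> (E u v \<longleftrightarrow> {a u..b u} \<inter> {a v..b v} \<noteq> {})"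
    using p unfolding proper_interval_graph_def by blast
  obtain L0 :: "_ \<Rightarrow> nat" where inj0: "inj_on L0 V"
    using finite_imp_inj_to_nat_seg[OF finV] by blast
  define lt where "lt = (\<lambda>u v. a u < a v \<or> (a u = a v \<and> L0 u < L0 v))"
  define L where "L = (\<lambda>v. card {w\<in>V. lt w v})"
  have lt_trans: "lt u w" if "lt u v" "lt v w" for u v w using that unfolding lt_def by auto
  have lt_irr: "\<not> lt u u" for u unfolding lt_def by auto
  have lt_tot: "lt u v \<or> lt v u" if "u \<in> V" "v \<in> V" "u \<noteq> v" for u v
    using that inj0 unfolding lt_def by (metis inj_onD linorder_neqE_linordered_idom linorder_neqE_nat)
  have Lmono: "L u < L v" if "lt u v" "u \<in> V" "v \<in> V" for u v
  proof -
    have "{w\<in>V. lt w u} \<subset> {w\<in>V. lt w v}" using that lt_trans lt_irr by blast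
    thus ?thesis unfolding L_def using finV by (simp add: psubset_card_mono)
  qed
  have inj: "inj_on L V"
    by (rule inj_onI) (metis Lmono lt_tot less_irrefl)
  have La: "a u \<le> a v" if "L u < L v" "u \<in> V" "v \<in> V" for u v
  proof (rule ccontr)
    assume "\<not> a u \<le> a v"
    hence "lt v u" unfolding lt_def by auto
    thus False using Lmono that by fastforce
  qed
  have ab_mono: "b u \<le> b v" if "a u \<le> a v" "u \<in> V" "v \<in> V" for u v
  proof (rule ccontr)
    assume "\<not> b u \<le> b v"
    hence "{a v..b v} \<subset> {a u..b u}" using that ab by (auto simp: atLeastatMost_psubset_iff)
    thus False using np that by blast
  qed
  have "umbrella V E L" unfolding umbrella_def
  proof (intro ballI impI)
    fix x y z assume V: "x \<in> V" "y \<in> V" "z \<in> V" and lt1: "L x < L y" and lt2: "L y < L z" and Exz: "E x z"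
    have ne: "x \<noteq> y" "y \<noteq> z" "x \<noteq> z" using lt1 lt2 by auto
    have A: "a x \<le> a y" "a y \<le> a z" using La lt1 lt2 V by auto
    have Bm: "b x \<le> b y" "b y \<le> b z" using ab_mono A V by auto
    have "a z \<le> b x" using Exz ed V ne ivl_meet ab by meson
    hence "{a x..b x} \<inter> {a y..b y} \<noteq> {}" "{a y..b y} \<inter> {a z..b z} \<noteq> {}"
      using A Bm ab V by (simp_all add: ivl_meet)
    thus "E x y \<and> E y z" using ed V ne by auto
  qed
  thus ?thesis using inj by blast
qed

lemma frac_props:
  fixes m n :: nat
  shows "0 \<le> real n / (real n + 1)" "real n / (real n + 1) < 1"
    "m < n \<Longrightarrow> real m / (real m + 1) < real n / (real n + 1)"
  by (auto simp: field_simps)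

lemma umb_imp_pig:
  assumes g: "finite_simple_graph V E" and inj: "inj_on L V" and u: "umbrella V E L"
  shows "proper_interval_graph V E"
proof -
  have finV: "finite V" and sym: "\<And>u v. E u v \<Longrightarrow> E v u"
    and irr: "\<And>u. \<not> E u u" and EV: "\<And>u v. E u v \<Longrightarrow> u \<in> V \<and> v \<in> V"
    using g unfolding finite_simple_graph_def by auto
  have umb: "E x y \<and> E y z" if "x \<in> V" "y \<in> V" "z \<in> V" "L x < L y" "L y < L z" "E x z" for x y z
    using u that unfolding umbrella_def by blast
  define N where "N = (\<lambda>v. {w\<in>V. w = v \<or> E v w})"
  define r where "r = (\<lambda>v. Max (L ` N v))"
  have finN: "finite (L ` N v)" for v unfolding N_def using finV by auto
  have r_ge: "L w \<le> r v" if "w \<in> N v" for v w unfolding r_def using finN that by auto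
  have r_att: "\<exists>w\<in>N v. L w = r v" if "v \<in> V" for v
  proof -
    have "L ` N v \<noteq> {}" using that unfolding N_def by auto
    hence "r v \<in> L ` N v" unfolding r_def using finN Max_in by blast
    thus ?thesis by auto
  qed
  have Lr: "L v \<le> r v" if "v \<in> V" for v using r_ge that unfolding N_def by auto
  have K1: "E u v \<longleftrightarrow> L v \<le> r u" if V: "u \<in> V" "v \<in> V" and lt: "L u < L v" for u v
  proof
    assume "E u v" thus "L v \<le> r u" using r_ge V unfolding N_def by auto
  next
    assume le: "L v \<le> r u"
    obtain w where w: "w \<in> N u" "L w = r u" using r_att V by blast
    have "w \<noteq> u" using w le lt by auto
    hence Euw: "E u w" "w \<in> V" using w unfolding N_def by auto
    show "E u v"
    proof (cases "w = v")
      case True thus ?thesis using Euw by simp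
    next
      case False
      hence "L w \<noteq> L v" using inj Euw V by (metis inj_onD)
      hence "L v < L w" using le w by auto
      thus ?thesis using umb[OF V(1) V(2) Euw(2) lt _ Euw(1)] by blast
    qed
  qed
  have K2: "r u \<le> r v" if V: "u \<in> V" "v \<in> V" and lt: "L u < L v" for u v
  proof -
    obtain w where w: "w \<in> N u" "L w = r u" using r_att V by blast
    show ?thesis
    proof (cases "w = u")
      case True thus ?thesis using w lt Lr[OF V(2)] by auto
    next
      case False
      hence Euw: "E u w" "w \<in> V" using w unfolding N_def by auto
      show ?thesis
      proof (cases "L w \<le> L v")
        case True thus ?thesis using w Lr[OF V(2)] by auto
      next
        case False
        hence "E v w" using umb[OF V(1) V(2) Euw(2) lt _ Euw(1)] by auto
        hence "w \<in> N v" using Euw unfolding N_def by auto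
        thus ?thesis using r_ge[of w v] w by simp
      qed
    qed
  qed
  define a where "a = (\<lambda>v. real (L v))"
  define b where "b = (\<lambda>v. real (r v) + real (L v) / (real (L v) + 1))"
  have ab: "a v \<le> b v" if "v \<in> V" for v
  proof -
    have h1: "real (L v) \<le> real (r v)" using Lr[OF that] by simp
    have h2: "0 \<le> real (L v) / (real (L v) + 1)" by (rule frac_props(1))
    show ?thesis unfolding a_def b_def using h1 h2 by linarith
  qed
  have strict: "a u < a v \<and> b u < b v" if "u \<in> V" "v \<in> V" "L u < L v" for u v
    using that K2 frac_props(3)[of "L u" "L v"] unfolding a_def b_def by fastforce
  have meet: "({a u..b u} \<inter> {a v..b v} \<noteq> {}) \<longleftrightarrow> E u v" if V: "u \<in> V" "v \<in> V" and lt: "L u < L v" for u v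
  proof -
    have "({a u..b u} \<inter> {a v..b v} \<noteq> {}) \<longleftrightarrow> a v \<le> b u"
      using ivl_meet[OF ab[OF V(1)] ab[OF V(2)]] strict[OF V lt] ab V by auto
    also have "\<dots> \<longleftrightarrow> L v \<le> r u"
    proof
      assume "a v \<le> b u"
      hence "real (L v) < real (r u) + 1" using frac_props(2)[of "L u"] unfolding a_def b_def by linarith
      thus "L v \<le> r u" by linarith
    next
      assume "L v \<le> r u"
      hence h1: "real (L v) \<le> real (r u)" by simp
      have h2: "0 \<le> real (L u) / (real (L u) + 1)" by (rule frac_props(1))
      show "a v \<le> b u" unfolding a_def b_def using h1 h2 by linarith
    qed
    also have "\<dots> \<longleftrightarrow> E u v" using K1[OF V lt] by simp
    finally show ?thesis .
  qed
  show ?thesis unfolding proper_interval_graph_def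
  proof (intro exI conjI ballI impI)
    show "\<And>v. v \<in> V \<Longrightarrow> a v \<le> b v" using ab by blast
  next
    fix u v assume V: "u \<in> V" "v \<in> V"
    show "\<not> {a u..b u} \<subset> {a v..b v}"
    proof (cases "L u < L v")
      case True thus ?thesis using strict[OF V True] ab V by (auto simp: atLeastatMost_psubset_iff)
    next
      case False
      show ?thesis
      proof (cases "L v < L u")
        case True thus ?thesis using strict[OF V(2) V(1) True] ab V by (auto simp: atLeastatMost_psubset_iff)
      next
        case False
        hence "u = v" using \<open>\<not> L u < L v\<close> inj V by (metis inj_onD linorder_neqE_nat)
        thus ?thesis by simp
      qed
    qed
  next
    fix u v assume V: "u \<in> V" "v \<in> V" and ne: "u \<noteq> v"
    have "L u \<noteq> L v" using inj V ne by (metis inj_onD)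
    hence "L u < L v \<or> L v < L u" by auto
    thus "E u v \<longleftrightarrow> {a u..b u} \<inter> {a v..b v} \<noteq> {}"
      using meet[OF V] meet[OF V(2) V(1)] sym by (auto simp: Int_commute)
  qed
qed

theorem theorem1p8:
  fixes V :: "'a set" and E :: "'a \<Rightarrow> 'a \<Rightarrow> bool"
  assumes "finite_simple_graph V E"
  shows "sortable (independence_complex V E) \<longleftrightarrow> proper_interval_graph V E"
  using sortable_iff_umb[OF assms] pig_imp_umb[OF assms] umb_imp_pig[OF assms] by blast

end
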